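(* Let $\mathcal{X}\subset\mathbb{R}^d$ be bounded, let $\mathcal{M}_f$ be a set of finite (nonzero) measures on $\mathcal{X}$, set $\mathcal{F}:=\{\Lambda^*\mid\Lambda\in\mathcal{M}_f\}$, and let $S':\mathcal{F}\times\mathcal{X}\to\mathbb{R}$ be a (strictly) consistent scoring function for $\mathrm{id}_{\mathcal{F}}$. Define $S:\mathcal{F}\times\mathbb{M}_0\to\mathbb{R}$ by $$S(\Lambda^*,\{y_1,\dots,y_n\}):=\sum_{i=1}^n S'(\Lambda^*,y_i)$$ for $n\in\mathbb{N}$ and $S(\Lambda^*,\emptyset)=0$. Then $S$ is consistent for the normalized intensity measure, i.e. for every finite point process $\Phi$ on $\mathcal{X}$ with intensity measure $\Lambda\in\mathcal{M}_f$ (for which the expected scores exist) and every $Q\in\mathcal{M}_f$, $\mathbb{E}S(Q^*,\Phi)\ge\mathbb{E}S(\Lambda^*,\Phi)$. It is strictly consistent (equality forces $Q^*=\Lambda^*$) if $S'$ is strictly consistent.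
   Context: $\mathbb{M}_0$ denotes the space of finite counting measures on $\mathcal{X}$; a realization is written as the set of its points $\{y_1,\dots,y_n\}$. For a finite measure $\Lambda$ on $\mathcal{X}$, $|\Lambda|:=\Lambda(\mathcal{X})$ and $\Lambda^*:=\Lambda/|\Lambda|$ is its normalized measure. The intensity measure of $\Phi$ is $\Lambda(B)=\mathbb{E}\Phi(B)$. A scoring function $S'$ on $\mathcal{F}\times\mathcal{X}$ is consistent for $\mathrm{id}_{\mathcal{F}}$ if $S'(G,\cdot)$ is $F$-integrable and $\int S'(G,x)\,dF(x)\ge\int S'(F,x)\,dF(x)$ for all $F,G\in\mathcal{F}$; strictly consistent if equality implies $G=F$. *)

theory Defs
  imports "HOL-Probability.Probability"
begin

definition finite_nonzero_measures_on :: "'a::euclidean_space set \<Rightarrow> 'a measure set" where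
  "finite_nonzero_measures_on X =
     {M. space M = X \<and> sets M = sets (restrict_space borel X) \<and>
         emeasure M X < \<infinity> \<and> emeasure M X \<noteq> 0}"

definition normalize_measure :: "'a measure \<Rightarrow> 'a measure" where
  "normalize_measure M = scale_measure (ennreal (1 / measure M (space M))) M"

definition consistent_id :: "'a measure set \<Rightarrow> ('a measure \<Rightarrow> 'a \<Rightarrow> real) \<Rightarrow> bool" where
  "consistent_id Fs S' \<longleftrightarrow>
     (\<forall>F\<in>Fs. \<forall>G\<in>Fs. integrable F (S' G) \<and>
        (\<integral>x. S' G x \<partial>F) \<ge> (\<integral>x. S' F x \<partial>F))"

definition strictly_consistent_id :: "'a measure set \<Rightarrow> ('a measure \<Rightarrow> 'a \<Rightarrow> real) \<Rightarrow> bool" where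
  "strictly_consistent_id Fs S' \<longleftrightarrow> consistent_id Fs S' \<and>
     (\<forall>F\<in>Fs. \<forall>G\<in>Fs. (\<integral>x. S' G x \<partial>F) = (\<integral>x. S' F x \<partial>F) \<longrightarrow> G = F)"

text \<open>Finite counting measures are represented as finite multisets of points;
  count_in phi B is phi(B).\<close>
definition count_in :: "'a multiset \<Rightarrow> 'a set \<Rightarrow> nat" where
  "count_in \<phi> B = size (filter_mset (\<lambda>y. y \<in> B) \<phi>)"

definition finite_point_process :: "'b measure \<Rightarrow> 'a::euclidean_space set \<Rightarrow> ('b \<Rightarrow> 'a multiset) \<Rightarrow> bool" where
  "finite_point_process P X \<Phi> \<longleftrightarrow> prob_space P \<and>
     (\<forall>\<omega>\<in>space P. set_mset (\<Phi> \<omega>) \<subseteq> X) \<and>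
     (\<forall>B\<in>sets (restrict_space borel X).
        (\<lambda>\<omega>. count_in (\<Phi> \<omega>) B) \<in> measurable P (count_space UNIV))"

definition is_intensity_measure :: "'b measure \<Rightarrow> ('b \<Rightarrow> 'a multiset) \<Rightarrow> 'a measure \<Rightarrow> bool" where
  "is_intensity_measure P \<Phi> \<Lambda> \<longleftrightarrow>
     (\<forall>B\<in>sets \<Lambda>. emeasure \<Lambda> B = (\<integral>\<^sup>+\<omega>. of_nat (count_in (\<Phi> \<omega>) B) \<partial>P))"

definition sum_score :: "('a measure \<Rightarrow> 'a \<Rightarrow> real) \<Rightarrow> 'a measure \<Rightarrow> 'a multiset \<Rightarrow> real" where
  "sum_score S' G \<phi> = sum_mset (image_mset (S' G) \<phi>)"

end

theory Submission
  imports Defs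
begin

lemma msum_indicator: "sum_mset (image_mset (indicator A) \<phi>) = (of_nat (count_in \<phi> A) :: ennreal)"
  unfolding count_in_def by (induction \<phi>) (auto simp: indicator_def)

lemma msum_cmult: "sum_mset (image_mset (\<lambda>x. c * f x) \<phi>) = (c::'b::comm_semiring_1) * sum_mset (image_mset f \<phi>)"
  by (induction \<phi>) (auto simp: distrib_left)

lemma msum_add: "sum_mset (image_mset (\<lambda>x. f x + g x) \<phi>) = sum_mset (image_mset f \<phi>) + (sum_mset (image_mset g \<phi>) :: 'b::comm_monoid_add)"
  by (induction \<phi>) (auto simp: algebra_simps)

lemma msum_diff: "sum_mset (image_mset (\<lambda>x. f x - g x) \<phi>) = sum_mset (image_mset f \<phi>) - (sum_mset (image_mset g \<phi>) :: 'b::ab_group_add)"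
  by (induction \<phi>) (auto simp: algebra_simps)

lemma msum_nonneg: "(\<And>x. 0 \<le> f x) \<Longrightarrow> 0 \<le> sum_mset (image_mset f \<phi>) " for f :: "'a \<Rightarrow> real"
  by (induction \<phi>) auto

lemma msum_ennreal: "(\<And>x. 0 \<le> f x) \<Longrightarrow> sum_mset (image_mset (\<lambda>x. ennreal (f x)) \<phi>) = ennreal (sum_mset (image_mset f \<phi>))"
  by (induction \<phi>) (auto simp: ennreal_plus msum_nonneg)

lemma msum_SUP:
  fixes U :: "nat \<Rightarrow> 'a \<Rightarrow> ennreal"
  assumes "incseq U"
  shows "sum_mset (image_mset (\<lambda>x. SUP i. U i x) \<phi>) = (SUP i. sum_mset (image_mset (U i) \<phi>))"
proof (induction \<phi>)
  case empty then show ?case by simp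
next
  case (add x \<phi>)
  have i1: "incseq (\<lambda>i. U i x)" using assms by (auto simp: incseq_def le_fun_def)
  have i2: "incseq (\<lambda>i. sum_mset (image_mset (U i) \<phi>))"
    using assms by (auto simp: incseq_def le_fun_def intro!: sum_mset_mono)
  show ?case using add ennreal_SUP_add[OF i1 i2] by simp
qed

lemma campbell_nn:
  fixes f :: "'a::euclidean_space \<Rightarrow> ennreal"
  assumes fpp: "finite_point_process P X \<Phi>"
    and int: "is_intensity_measure P \<Phi> L"
    and sp: "space L = X" and st: "sets L = sets (restrict_space borel X)"
    and f: "f \<in> borel_measurable L"
  shows "(\<lambda>\<omega>. sum_mset (image_mset f (\<Phi> \<omega>))) \<in> borel_measurable P \<and>
         (\<integral>\<^sup>+\<omega>. sum_mset (image_mset f (\<Phi> \<omega>)) \<partial>P) = integral\<^sup>N L f"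
  using f
proof (induction rule: borel_measurable_induct)
  case (cong f g)
  have eq: "sum_mset (image_mset f (\<Phi> \<omega>)) = sum_mset (image_mset g (\<Phi> \<omega>))" if "\<omega> \<in> space P" for \<omega>
  proof -
    have "set_mset (\<Phi> \<omega>) \<subseteq> space L" using fpp that sp unfolding finite_point_process_def by auto
    then show ?thesis using cong(3) by (intro arg_cong[where f=sum_mset] image_mset_cong) auto
  qed
  have "(\<lambda>\<omega>. sum_mset (image_mset f (\<Phi> \<omega>))) \<in> borel_measurable P"
    using cong.IH by (subst measurable_cong[OF eq]) auto
  moreover have "(\<integral>\<^sup>+\<omega>. sum_mset (image_mset f (\<Phi> \<omega>)) \<partial>P) = (\<integral>\<^sup>+\<omega>. sum_mset (image_mset g (\<Phi> \<omega>)) \<partial>P)"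
    using eq by (intro nn_integral_cong) auto
  moreover have "integral\<^sup>N L f = integral\<^sup>N L g" using cong(3) by (intro nn_integral_cong) auto
  ultimately show ?case using cong.IH by simp
next
  case (set A)
  have A: "A \<in> sets (restrict_space borel X)" using set st by simp
  have m: "(\<lambda>\<omega>. count_in (\<Phi> \<omega>) A) \<in> measurable P (count_space UNIV)"
    using fpp A unfolding finite_point_process_def by auto
  have "(\<lambda>\<omega>. (of_nat (count_in (\<Phi> \<omega>) A) :: ennreal)) \<in> borel_measurable P"
    by (rule measurable_compose[OF m]) simp
  then show ?case using int set unfolding is_intensity_measure_def
    by (simp add: msum_indicator)
next
  case (mult u c)
  have m: "(\<lambda>\<omega>. sum_mset (image_mset u (\<Phi> \<omega>))) \<in> borel_measurable P" using mult.IH by blast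
  note m[measurable]
  have "(\<lambda>\<omega>. c * sum_mset (image_mset u (\<Phi> \<omega>))) \<in> borel_measurable P" by measurable
  then show ?case unfolding msum_cmult
    using mult.IH by (simp add: nn_integral_cmult[OF m] nn_integral_cmult[OF mult.hyps(2)])
next
  case (add u v)
  have m1: "(\<lambda>\<omega>. sum_mset (image_mset u (\<Phi> \<omega>))) \<in> borel_measurable P" using add.IH by blast
  have m2: "(\<lambda>\<omega>. sum_mset (image_mset v (\<Phi> \<omega>))) \<in> borel_measurable P" using add.IH by blast
  note m1[measurable] m2[measurable]
  have "(\<lambda>\<omega>. sum_mset (image_mset v (\<Phi> \<omega>)) + sum_mset (image_mset u (\<Phi> \<omega>))) \<in> borel_measurable P" by measurable
  then show ?case unfolding msum_add
    using add.IH add.hyps by (simp add: nn_integral_add[OF m2 m1] nn_integral_add)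
next
  case (seq U)
  have inc0: "incseq U" and mU: "\<And>i. U i \<in> borel_measurable L" using seq.hyps by auto
  note IH = seq.IH
  have eqs: "sum_mset (image_mset (SUP i. U i) \<phi>) = (SUP i. sum_mset (image_mset (U i) \<phi>))" for \<phi>
    using msum_SUP[OF inc0, of \<phi>] by (simp add: SUP_apply[abs_def])
  have inc: "incseq (\<lambda>i \<omega>. sum_mset (image_mset (U i) (\<Phi> \<omega>)))"
    using inc0 by (auto simp: incseq_def le_fun_def intro!: sum_mset_mono)
  have ms: "\<And>i. (\<lambda>\<omega>. sum_mset (image_mset (U i) (\<Phi> \<omega>))) \<in> borel_measurable P" using IH by blast
  have "(\<lambda>\<omega>. sum_mset (image_mset (SUP i. U i) (\<Phi> \<omega>))) \<in> borel_measurable P"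
    unfolding eqs by (intro borel_measurable_SUP ms) simp
  moreover have "(\<integral>\<^sup>+\<omega>. sum_mset (image_mset (SUP i. U i) (\<Phi> \<omega>)) \<partial>P) = integral\<^sup>N L (SUP i. U i)"
  proof -
    have "(\<integral>\<^sup>+\<omega>. sum_mset (image_mset (SUP i. U i) (\<Phi> \<omega>)) \<partial>P) = (SUP i. (\<integral>\<^sup>+\<omega>. sum_mset (image_mset (U i) (\<Phi> \<omega>)) \<partial>P))"
      unfolding eqs using nn_integral_monotone_convergence_SUP[OF inc ms] by (simp add: SUP_apply)
    also have "\<dots> = (SUP i. integral\<^sup>N L (U i))" using IH by simp
    also have "\<dots> = (\<integral>\<^sup>+x. (SUP i. U i x) \<partial>L)" using nn_integral_monotone_convergence_SUP[OF inc0 mU] by simp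
    also have "\<dots> = integral\<^sup>N L (SUP i. U i)" by (rule arg_cong[where f="integral\<^sup>N L"]) (rule ext, simp add: SUP_apply image_image)
    finally show ?thesis .
  qed
  ultimately show ?case by blast
qed

lemma campbell_nonneg:
  fixes g :: "'a::euclidean_space \<Rightarrow> real"
  assumes fpp: "finite_point_process P X \<Phi>"
    and int: "is_intensity_measure P \<Phi> L"
    and sp: "space L = X" and st: "sets L = sets (restrict_space borel X)"
    and g: "integrable L g" and nn: "\<And>x. 0 \<le> g x"
  shows "integrable P (\<lambda>\<omega>. sum_mset (image_mset g (\<Phi> \<omega>))) \<and>
         (\<integral>\<omega>. sum_mset (image_mset g (\<Phi> \<omega>)) \<partial>P) = integral\<^sup>L L g"
proof -
  have gm: "g \<in> borel_measurable L" using g by auto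
  then have gm': "(\<lambda>x. ennreal (g x)) \<in> borel_measurable L" by measurable
  note C = campbell_nn[OF fpp int sp st gm']
  have e: "ennreal (sum_mset (image_mset g \<phi>)) = sum_mset (image_mset (\<lambda>x. ennreal (g x)) \<phi>)" for \<phi>
    using msum_ennreal[of g \<phi>] nn by simp
  have hnn: "0 \<le> sum_mset (image_mset g \<phi>)" for \<phi> using msum_nonneg[of g \<phi>] nn by simp
  have hm: "(\<lambda>\<omega>. sum_mset (image_mset g (\<Phi> \<omega>))) \<in> borel_measurable P"
  proof -
    have "(\<lambda>\<omega>. enn2real (sum_mset (image_mset (\<lambda>x. ennreal (g x)) (\<Phi> \<omega>)))) \<in> borel_measurable P"
      using C[THEN conjunct1] by (rule borel_measurable_enn2real)
    then show ?thesis unfolding e[symmetric] using hnn by simp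
  qed
  have fin: "integral\<^sup>N L (\<lambda>x. ennreal (g x)) = ennreal (integral\<^sup>L L g)"
    using nn_integral_eq_integral[OF g] nn by simp
  have eqn: "(\<integral>\<^sup>+\<omega>. ennreal (sum_mset (image_mset g (\<Phi> \<omega>))) \<partial>P) = ennreal (integral\<^sup>L L g)"
    unfolding e using C fin by simp
  have i: "integrable P (\<lambda>\<omega>. sum_mset (image_mset g (\<Phi> \<omega>)))"
    by (rule integrableI_nonneg[OF hm]) (use hnn eqn in auto)
  have "(\<integral>\<omega>. sum_mset (image_mset g (\<Phi> \<omega>)) \<partial>P) = integral\<^sup>L L g"
  proof -
    have "0 \<le> integral\<^sup>L L g" by (rule integral_nonneg_AE) (use nn in auto)
    then show ?thesis using integral_eq_nn_integral[OF hm] hnn eqn by simp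
  qed
  with i show ?thesis by blast
qed

lemma campbell_real:
  fixes f :: "'a::euclidean_space \<Rightarrow> real"
  assumes fpp: "finite_point_process P X \<Phi>"
    and int: "is_intensity_measure P \<Phi> L"
    and sp: "space L = X" and st: "sets L = sets (restrict_space borel X)"
    and f: "integrable L f"
  shows "(\<integral>\<omega>. sum_mset (image_mset f (\<Phi> \<omega>)) \<partial>P) = integral\<^sup>L L f"
proof -
  define fp where "fp x = max 0 (f x)" for x
  define fn where "fn x = max 0 (- f x)" for x
  have ip: "integrable L fp" unfolding fp_def using f by auto
  have in': "integrable L fn" unfolding fn_def using f by auto
  have nnp: "\<And>x. 0 \<le> fp x" and nnn: "\<And>x. 0 \<le> fn x" unfolding fp_def fn_def by auto
  note A = campbell_nonneg[OF fpp int sp st ip nnp] campbell_nonneg[OF fpp int sp st in' nnn]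
  have fe: "f = (\<lambda>x. fp x - fn x)" unfolding fp_def fn_def by auto
  have "(\<integral>\<omega>. sum_mset (image_mset f (\<Phi> \<omega>)) \<partial>P)
      = (\<integral>\<omega>. sum_mset (image_mset fp (\<Phi> \<omega>)) - sum_mset (image_mset fn (\<Phi> \<omega>)) \<partial>P)"
    by (subst fe) (simp only: msum_diff)
  also have "\<dots> = integral\<^sup>L L fp - integral\<^sup>L L fn"
    using Bochner_Integration.integral_diff[OF A(1)[THEN conjunct1] A(2)[THEN conjunct1]] A by simp
  also have "\<dots> = integral\<^sup>L L (\<lambda>x. fp x - fn x)" by (simp add: Bochner_Integration.integral_diff ip in')
  also have "\<dots> = integral\<^sup>L L f" using fe by simp
  finally show ?thesis .
qed

lemma scale_as_density:
  assumes "0 \<le> c"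
  shows "scale_measure (ennreal c) M = density M (\<lambda>_. ennreal c)"
proof (rule measure_eqI)
  show "sets (scale_measure (ennreal c) M) = sets (density M (\<lambda>_. ennreal c))" by simp
  fix A assume "A \<in> sets (scale_measure (ennreal c) M)"
  then have A: "A \<in> sets M" by simp
  show "emeasure (scale_measure (ennreal c) M) A = emeasure (density M (\<lambda>_. ennreal c)) A"
    using A by (simp add: emeasure_density nn_integral_cmult_indicator)
qed

lemma scale_integral:
  assumes c: "0 \<le> c" and h: "h \<in> borel_measurable M"
  shows "integral\<^sup>L (scale_measure (ennreal c) M) h = c * integral\<^sup>L M h"
    and "integrable (scale_measure (ennreal c) M) h \<longleftrightarrow> integrable M (\<lambda>x. c * h x)"
proof -
  show "integral\<^sup>L (scale_measure (ennreal c) M) h = c * integral\<^sup>L M h"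
    unfolding scale_as_density[OF c] using integral_density[OF h, of "\<lambda>_. c"] c by simp
  show "integrable (scale_measure (ennreal c) M) h \<longleftrightarrow> integrable M (\<lambda>x. c * h x)"
    unfolding scale_as_density[OF c] using integrable_density[OF h, of "\<lambda>_. c"] c by simp
qed

theorem proposition3p7:
  fixes X :: "'a::euclidean_space set"
    and Mf :: "'a measure set"
    and S' :: "'a measure \<Rightarrow> 'a \<Rightarrow> real"
    and P :: "'b measure"
    and \<Phi> :: "'b \<Rightarrow> 'a multiset"
    and \<Lambda> Q :: "'a measure"
  assumes "bounded X"
    and "Mf \<subseteq> finite_nonzero_measures_on X"
    and "consistent_id (normalize_measure ` Mf) S'"
    and "finite_point_process P X \<Phi>"
    and "\<Lambda> \<in> Mf"
    and "is_intensity_measure P \<Phi> \<Lambda>"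
    and "Q \<in> Mf"
    and "integrable P (\<lambda>\<omega>. sum_score S' (normalize_measure Q) (\<Phi> \<omega>))"
    and "integrable P (\<lambda>\<omega>. sum_score S' (normalize_measure \<Lambda>) (\<Phi> \<omega>))"
  shows "(\<integral>\<omega>. sum_score S' (normalize_measure Q) (\<Phi> \<omega>) \<partial>P)
           \<ge> (\<integral>\<omega>. sum_score S' (normalize_measure \<Lambda>) (\<Phi> \<omega>) \<partial>P)
         \<and> (strictly_consistent_id (normalize_measure ` Mf) S' \<longrightarrow>
              (\<integral>\<omega>. sum_score S' (normalize_measure Q) (\<Phi> \<omega>) \<partial>P)
                = (\<integral>\<omega>. sum_score S' (normalize_measure \<Lambda>) (\<Phi> \<omega>) \<partial>P) \<longrightarrow>
              normalize_measure Q = normalize_measure \<Lambda>)"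
proof -
  note fin = assms(2)[unfolded finite_nonzero_measures_on_def]
  have spL: "space \<Lambda> = X" and stL: "sets \<Lambda> = sets (restrict_space borel X)"
    and fL: "emeasure \<Lambda> X < \<infinity>" and nzL: "emeasure \<Lambda> X \<noteq> 0" using fin assms(5) by auto
  define m where "m = measure \<Lambda> X"
  have mpos: "0 < m" unfolding m_def using fL nzL
    by (simp add: measure_def enn2real_positive_iff zero_less_iff_neq_zero)
  define c where "c = 1 / m"
  have cpos: "0 < c" unfolding c_def using mpos by simp
  have nL: "normalize_measure \<Lambda> = scale_measure (ennreal c) \<Lambda>"
    unfolding normalize_measure_def c_def m_def spL ..
  define QN where "QN = normalize_measure Q"
  define LN where "LN = normalize_measure \<Lambda>"
  have QN: "QN \<in> normalize_measure ` Mf" and LN: "LN \<in> normalize_measure ` Mf"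
    unfolding QN_def LN_def using assms(5,7) by auto
  have key: "integrable \<Lambda> (S' G) \<and> integral\<^sup>L LN (S' G) = c * integral\<^sup>L \<Lambda> (S' G)"
    if "integrable LN (S' G)" for G
  proof -
    have "S' G \<in> borel_measurable LN" using that by auto
    then have hm: "S' G \<in> borel_measurable \<Lambda>" unfolding LN_def nL by simp
    have "integrable \<Lambda> (\<lambda>x. c * S' G x)" using that scale_integral(2)[OF _ hm, of c] cpos
      unfolding LN_def nL by simp
    then have "integrable \<Lambda> (S' G)" using cpos by simp
    then show ?thesis using scale_integral(1)[OF _ hm, of c] cpos unfolding LN_def nL by simp
  qed
  have cons: "integrable LN (S' QN)" "integrable LN (S' LN)"
    "integral\<^sup>L LN (S' QN) \<ge> integral\<^sup>L LN (S' LN)"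
    using assms(3) QN LN unfolding consistent_id_def by auto
  note kQ = key[OF cons(1)] and kL = key[OF cons(2)]
  have EQ: "(\<integral>\<omega>. sum_score S' QN (\<Phi> \<omega>) \<partial>P) = integral\<^sup>L \<Lambda> (S' QN)"
    unfolding sum_score_def using campbell_real[OF assms(4) assms(6) spL stL kQ[THEN conjunct1]] .
  have EL: "(\<integral>\<omega>. sum_score S' LN (\<Phi> \<omega>) \<partial>P) = integral\<^sup>L \<Lambda> (S' LN)"
    unfolding sum_score_def using campbell_real[OF assms(4) assms(6) spL stL kL[THEN conjunct1]] .
  have ge: "integral\<^sup>L \<Lambda> (S' QN) \<ge> integral\<^sup>L \<Lambda> (S' LN)"
    using cons(3) kQ kL cpos by simp
  have strict: "QN = LN" if sc: "strictly_consistent_id (normalize_measure ` Mf) S'"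
    and eq: "integral\<^sup>L \<Lambda> (S' QN) = integral\<^sup>L \<Lambda> (S' LN)"
  proof -
    have "integral\<^sup>L LN (S' QN) = integral\<^sup>L LN (S' LN)" using eq kQ kL by simp
    then show ?thesis using sc QN LN unfolding strictly_consistent_id_def by blast
  qed
  show ?thesis using EQ EL ge strict unfolding QN_def LN_def by auto
qed

end
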